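(* Let $\ell>0$, $r>0$, $\lambda>0$, and let $G$ be a probability distribution on $[0,\infty)$ with finite mean $s_1=\int s\,G(ds)$. Let $W=(W_t)_{t\in\mathbb{Z}_+}$ be the greedy polling population process on the circle of circumference $\ell$ with arrival rate $\lambda$, scan radius $r$ and interpolling distribution $G$ (described in the context). If $\lambda s_1\ge 1$, then $W$ is not positive recurrent, and if $\lambda s_1>1$, then $\|W_t\|\to\infty$ almost surely as $t\to\infty$, for every initial state.
   Context: $S$ is the circle of circumference $\ell$, with $d(x,y)$ the length of the shortest arc joining $x$ and $y$, and $m$ the uniform probability distribution on $S$. For $x\in S$ and $\rho>0$, $B_\rho(x)=\{y\in S: d(x,y)<\rho\}$. $M_+(S)$ is the set of finite counting measures (configurations) on $S$; $\|\zeta\|=\zeta(S)$; $x\in\zeta$ means $\zeta(\{x\})>0$. For $\zeta\in M_+(S)$ and $x\in\zeta$, $\Gamma_\zeta(x)=\{y\in S: d(x,y)<d(x',y)\text{ for all } x'\in\zeta,\ x'\neq x\}$. The process $W$ is the Markov chain on $M_+(S)$ with the following transition from $W_t=\zeta$: first $N$ new customers are added at i.i.d. $m$-distributed locations, where $P(N=n)=\int e^{-\lambda s}\frac{(\lambda s)^n}{n!}\,G(ds)$; call the result $\zeta'$. Then a point $U$ uniform on $S$ is chosen independently; if $\zeta'(B_r(U))=0$ nothing changes, otherwise one customer at the atom of $\zeta'$ nearest to $U$ is removed (equivalently, for each $x\in\zeta'$ one customer at $x$ is removed with probability $m(B_r(x)\cap\Gamma_{\zeta'}(x))$). The result is $W_{t+1}$.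 *)

theory Defs
  imports "HOL-Probability.Probability" "HOL-Library.Multiset"
begin

text \<open>The circle S of circumference l is represented by the interval [0,l);
  configurations (finite counting measures on S) are multisets of reals.\<close>

definition circ_dist :: "real \<Rightarrow> real \<Rightarrow> real \<Rightarrow> real" where
  "circ_dist l x y = min \<bar>x - y\<bar> (l - \<bar>x - y\<bar>)"

definition unif_circ :: "real \<Rightarrow> real measure" where
  "unif_circ l = uniform_measure lborel {0..<l}"

definition arrivals_dist :: "real \<Rightarrow> real measure \<Rightarrow> nat measure" where
  "arrivals_dist lam G = density (count_space UNIV)
     (\<lambda>n. \<integral>\<^sup>+ s. ennreal (exp (- lam * s) * (lam * s) ^ n / fact n) \<partial>G)"

text \<open>atom of the configuration nearest to u (ties, a null event, broken by the smallest point)\<close>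
definition nearest_atom :: "real \<Rightarrow> real multiset \<Rightarrow> real \<Rightarrow> real" where
  "nearest_atom l \<zeta> u =
     Min {x \<in> set_mset \<zeta>. circ_dist l x u = Min ((\<lambda>y. circ_dist l y u) ` set_mset \<zeta>)}"

definition serve :: "real \<Rightarrow> real \<Rightarrow> real multiset \<Rightarrow> real \<Rightarrow> real multiset" where
  "serve l r \<zeta> u =
     (if \<exists>x \<in># \<zeta>. circ_dist l x u < r then \<zeta> - {# nearest_atom l \<zeta> u #} else \<zeta>)"

text \<open>one step driven by input (N, positions X_0, X_1, ..., U): add customers at X_0..X_{N-1}, then serve\<close>
definition polling_step :: "real \<Rightarrow> real \<Rightarrow> real multiset \<Rightarrow> nat \<times> (nat \<Rightarrow> real) \<times> real \<Rightarrow> real multiset" where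
  "polling_step l r \<zeta> inp =
     (case inp of (n, xs, u) \<Rightarrow> serve l r (\<zeta> + mset (map xs [0..<n])) u)"

definition input_dist :: "real \<Rightarrow> real \<Rightarrow> real measure \<Rightarrow> (nat \<times> (nat \<Rightarrow> real) \<times> real) measure" where
  "input_dist l lam G = arrivals_dist lam G \<Otimes>\<^sub>M ((\<Pi>\<^sub>M i\<in>UNIV. unif_circ l) \<Otimes>\<^sub>M unif_circ l)"

definition polling_space :: "real \<Rightarrow> real \<Rightarrow> real measure \<Rightarrow> (nat \<times> (nat \<Rightarrow> real) \<times> real) stream measure" where
  "polling_space l lam G = stream_space (input_dist l lam G)"

fun polling_W :: "real \<Rightarrow> real \<Rightarrow> real multiset \<Rightarrow> (nat \<times> (nat \<Rightarrow> real) \<times> real) stream \<Rightarrow> nat \<Rightarrow> real multiset" where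
  "polling_W l r \<zeta> \<omega> 0 = \<zeta>"
| "polling_W l r \<zeta> \<omega> (Suc t) = polling_step l r (polling_W l r \<zeta> \<omega> t) (\<omega> !! t)"

text \<open>positive recurrence: the empty configuration (an accessible atom) has finite mean return time\<close>
definition return_time_empty :: "real \<Rightarrow> real \<Rightarrow> (nat \<times> (nat \<Rightarrow> real) \<times> real) stream \<Rightarrow> ennreal" where
  "return_time_empty l r \<omega> =
     (if \<exists>t\<ge>1. polling_W l r {#} \<omega> t = {#}
      then of_nat (LEAST t. t \<ge> 1 \<and> polling_W l r {#} \<omega> t = {#}) else \<infinity>)"

definition polling_positive_recurrent :: "real \<Rightarrow> real \<Rightarrow> real \<Rightarrow> real measure \<Rightarrow> bool" where
  "polling_positive_recurrent l r lam G \<longleftrightarrow>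
     (\<integral>\<^sup>+ \<omega>. return_time_empty l r \<omega> \<partial>polling_space l lam G) < \<infinity>"

end

theory Submission
  imports Defs
begin


definition pw :: "real \<Rightarrow> nat \<Rightarrow> real \<Rightarrow> real" where
  "pw lam n s = exp (- lam * s) * (lam * s) ^ n / fact n"

lemma pw_sums: "(\<lambda>n. pw lam n s) sums 1"
proof -
  have "(\<lambda>n. exp (- lam * s) * ((lam * s) ^ n /\<^sub>R fact n)) sums (exp (- lam * s) * exp (lam * s))"
    by (intro sums_mult exp_converges)
  then show ?thesis by (simp add: pw_def exp_minus field_simps)
qed

lemma pw_mean: "(\<lambda>n. real n * pw lam n s) sums (lam * s)"
proof -
  have "(\<lambda>n. (lam * s) * pw lam n s) sums ((lam * s) * 1)"
    by (intro sums_mult pw_sums)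
  moreover have "(lam * s) * pw lam n s = real (Suc n) * pw lam (Suc n) s" for n
    by (simp add: pw_def fact_Suc power_Suc del: of_nat_Suc)
  ultimately have "(\<lambda>n. real (Suc n) * pw lam (Suc n) s) sums (lam * s)" by simp
  then show ?thesis using sums_Suc_iff[of "\<lambda>n. real n * pw lam n s" "lam * s"] by simp
qed

lemma pw_nonneg: "s \<ge> 0 \<Longrightarrow> lam \<ge> 0 \<Longrightarrow> pw lam n s \<ge> 0"
  by (simp add: pw_def)

lemma arr_nn:
  assumes G: "sets G = sets borel"
  shows "(\<integral>\<^sup>+n. f n \<partial>arrivals_dist lam G) = (\<integral>\<^sup>+s. (\<Sum>n. ennreal (pw lam n s) * f n) \<partial>G)"
proof -
  have m: "(\<lambda>s. ennreal (pw lam n s)) \<in> borel_measurable G" for n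
    using G by (simp add: pw_def measurable_cong_sets[OF G refl])
  have "(\<integral>\<^sup>+n. f n \<partial>arrivals_dist lam G) = (\<Sum>n. (\<integral>\<^sup>+s. ennreal (pw lam n s) \<partial>G) * f n)"
    unfolding arrivals_dist_def
    by (subst nn_integral_density) (auto simp: nn_integral_count_space_nat pw_def mult.commute)
  also have "\<dots> = (\<Sum>n. \<integral>\<^sup>+s. ennreal (pw lam n s) * f n \<partial>G)"
    using m by (simp add: nn_integral_multc)
  also have "\<dots> = (\<integral>\<^sup>+s. (\<Sum>n. ennreal (pw lam n s) * f n) \<partial>G)"
    using m by (intro nn_integral_suminf[symmetric]) auto
  finally show ?thesis .
qed



lemma arr_prob:
  assumes G: "prob_space G" "sets G = sets borel" and ae: "AE s in G. s \<ge> 0" and lam: "lam \<ge> 0"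
  shows "prob_space (arrivals_dist lam G)"
proof (rule prob_spaceI)
  have "emeasure (arrivals_dist lam G) (space (arrivals_dist lam G)) = (\<integral>\<^sup>+n. 1 \<partial>arrivals_dist lam G)"
    by simp
  also have "\<dots> = (\<integral>\<^sup>+s. (\<Sum>n. ennreal (pw lam n s) * 1) \<partial>G)"
    by (rule arr_nn[OF G(2)])
  also have "\<dots> = (\<integral>\<^sup>+s. 1 \<partial>G)"
  proof (rule nn_integral_cong_AE)
    show "AE s in G. (\<Sum>n. ennreal (pw lam n s) * 1) = 1"
      using ae by eventually_elim (simp, intro suminf_ennreal_eq[where x=1, simplified] pw_sums pw_nonneg lam, auto)
  qed
  also have "\<dots> = 1" using prob_space.emeasure_space_1[OF G(1)] by simp
  finally show "emeasure (arrivals_dist lam G) (space (arrivals_dist lam G)) = 1" .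
qed

lemma arr_mean:
  assumes G: "prob_space G" "sets G = sets borel" and ae: "AE s in G. s \<ge> 0" and lam: "lam \<ge> 0"
    and int: "integrable G (\<lambda>s. s)"
  shows "(\<integral>\<^sup>+n. of_nat n \<partial>arrivals_dist lam G) = ennreal (lam * (\<integral> s. s \<partial>G))"
proof -
  have "(\<integral>\<^sup>+n. of_nat n \<partial>arrivals_dist lam G) = (\<integral>\<^sup>+s. (\<Sum>n. ennreal (pw lam n s) * of_nat n) \<partial>G)"
    by (rule arr_nn[OF G(2)])
  also have "\<dots> = (\<integral>\<^sup>+s. ennreal (lam * s) \<partial>G)"
  proof (rule nn_integral_cong_AE)
    show "AE s in G. (\<Sum>n. ennreal (pw lam n s) * of_nat n) = ennreal (lam * s)"
      using ae
    proof eventually_elim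
      case (elim s)
      have "(\<Sum>n. ennreal (pw lam n s) * of_nat n) = (\<Sum>n. ennreal (real n * pw lam n s))"
        by (simp add: ennreal_mult' ennreal_of_nat_eq_real_of_nat mult.commute)
      also have "\<dots> = ennreal (lam * s)"
        using elim lam by (intro suminf_ennreal_eq pw_mean) (auto intro!: mult_nonneg_nonneg pw_nonneg)
      finally show ?case .
    qed
  qed
  also have "\<dots> = ennreal (\<integral> s. lam * s \<partial>G)"
    using ae lam int by (intro nn_integral_eq_integral) auto
  finally show ?thesis by simp
qed

lemma arr_zero:
  assumes G: "prob_space G" "sets G = sets borel" and ae: "AE s in G. s \<ge> 0" and lam: "lam \<ge> 0"
  shows "(\<integral>\<^sup>+n. indicator {0} n \<partial>arrivals_dist lam G) > 0"
proof -
  have "(\<integral>\<^sup>+n. indicator {0} n \<partial>arrivals_dist lam G) = (\<integral>\<^sup>+s. (\<Sum>n. ennreal (pw lam n s) * indicator {0} n) \<partial>G)"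
    by (rule arr_nn[OF G(2)])
  also have "\<dots> = (\<integral>\<^sup>+s. ennreal (exp (- lam * s)) \<partial>G)"
  proof (rule nn_integral_cong)
    fix s
    have "(\<Sum>n. ennreal (pw lam n s) * indicator {0} n) = (\<Sum>n\<in>{0}. ennreal (pw lam n s) * indicator {0} n)"
      by (rule suminf_finite) auto
    then show "(\<Sum>n. ennreal (pw lam n s) * indicator {0} n) = ennreal (exp (- lam * s))"
      by (simp add: pw_def)
  qed
  also have "\<dots> > 0"
  proof -
    have m: "(\<lambda>s. ennreal (exp (- lam * s))) \<in> borel_measurable G"
      by (simp add: measurable_cong_sets[OF G(2) refl])
    have "\<not> (AE s in G. ennreal (exp (- lam * s)) = 0)"
      using prob_space.AE_False[OF G(1)] prob_space.emeasure_space_1[OF G(1)] by simp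
    then show ?thesis using nn_integral_0_iff_AE[OF m] by (simp add: zero_less_iff_neq_zero)
  qed
  finally show ?thesis .
qed

lemma unif_prob: "l > 0 \<Longrightarrow> prob_space (unif_circ l)"
  unfolding unif_circ_def by (rule prob_space_uniform_measure) auto

lemma input_prob:
  assumes "l > 0" "prob_space (arrivals_dist lam G)"
  shows "prob_space (input_dist l lam G)"
  unfolding input_dist_def
  using assms unif_prob
  by (intro prob_space_pair prob_space_PiM) auto

lemma input_fst:
  assumes "l > 0" "prob_space (arrivals_dist lam G)"
  shows "(\<integral>\<^sup>+x. f (fst x) \<partial>input_dist l lam G) = (\<integral>\<^sup>+n. f n \<partial>arrivals_dist lam G)"
proof -
  interpret P: prob_space "(\<Pi>\<^sub>M i\<in>UNIV. unif_circ l) \<Otimes>\<^sub>M unif_circ l"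
    using assms unif_prob by (intro prob_space_pair prob_space_PiM) auto
  have "(\<integral>\<^sup>+n. f n \<partial>arrivals_dist lam G) = (\<integral>\<^sup>+n. f n \<partial>distr (input_dist l lam G) (arrivals_dist lam G) fst)"
    unfolding input_dist_def by (simp add: P.distr_pair_fst)
  also have "\<dots> = (\<integral>\<^sup>+x. f (fst x) \<partial>input_dist l lam G)"
    unfolding input_dist_def
    by (subst nn_integral_distr) (auto simp: arrivals_dist_def)
  finally show ?thesis by simp
qed



lemma size_serve: "size \<zeta> \<le> size (serve l r \<zeta> u) + 1"
proof -
  have "size \<zeta> \<le> size (\<zeta> - {#a#}) + 1" for a :: real
    by (cases "a \<in># \<zeta>") (auto simp: size_Diff_singleton diff_single_trivial)
  then show ?thesis unfolding serve_def by auto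
qed

lemma size_step: "size \<zeta> + fst inp \<le> size (polling_step l r \<zeta> inp) + 1"
  unfolding polling_step_def
  using size_serve[of "\<zeta> + mset (map (fst (snd inp)) [0..<fst inp])" l r "snd (snd inp)"]
  by (cases inp) auto

lemma size_W: "size \<zeta> + (\<Sum>k<t. fst (\<omega> !! k)) \<le> size (polling_W l r \<zeta> \<omega> t) + t"
proof (induction t)
  case (Suc t)
  then show ?case using size_step[of "polling_W l r \<zeta> \<omega> t" "\<omega> !! t" l r] by simp
qed simp

definition cc :: "nat \<Rightarrow> nat \<Rightarrow> (nat \<times> 'b) stream \<Rightarrow> bool" where
  "cc a i \<omega> \<longleftrightarrow> (\<forall>j\<in>{1..i}. j < a + (\<Sum>k<j. fst (\<omega> !! k)))"

lemma cc_0[simp]: "cc a 0 \<omega>" by (simp add: cc_def)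

lemma cc_Suc: "cc a (Suc i) (x ## \<omega>) \<longleftrightarrow> 1 < a + fst x \<and> cc (a + fst x - 1) i \<omega>"
proof
  assume H: "cc a (Suc i) (x ## \<omega>)"
  have 1: "1 < a + fst x" using H[unfolded cc_def, rule_format, of 1] by simp
  have "cc (a + fst x - 1) i \<omega>" unfolding cc_def
  proof
    fix j assume j: "j \<in> {1..i}"
    have "Suc j < a + (\<Sum>k<Suc j. fst ((x ## \<omega>) !! k))"
      using H[unfolded cc_def, rule_format, of "Suc j"] j by simp
    then show "j < a + fst x - 1 + (\<Sum>k<j. fst (\<omega> !! k))"
      by (simp del: sum.lessThan_Suc add: sum.lessThan_Suc_shift)
  qed
  with 1 show "1 < a + fst x \<and> cc (a + fst x - 1) i \<omega>" by simp
next
  assume H: "1 < a + fst x \<and> cc (a + fst x - 1) i \<omega>"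
  show "cc a (Suc i) (x ## \<omega>)" unfolding cc_def
  proof
    fix j assume j: "j \<in> {1..Suc i}"
    show "j < a + (\<Sum>k<j. fst ((x ## \<omega>) !! k))"
    proof (cases j)
      case 0 then show ?thesis using j by simp
    next
      case (Suc j')
      show ?thesis
      proof (cases j')
        case 0 then show ?thesis using H Suc by simp
      next
        case (Suc j'')
        have "j' < a + fst x - 1 + (\<Sum>k<j'. fst (\<omega> !! k))"
          using H[THEN conjunct2, unfolded cc_def, rule_format, of j'] j Suc \<open>j = Suc j'\<close> by simp
        then show ?thesis using \<open>j = Suc j'\<close> H by (simp del: sum.lessThan_Suc add: sum.lessThan_Suc_shift)
      qed
    qed
  qed
qed

lemma cc_mono: "cc a i \<omega> \<Longrightarrow> k \<le> i \<Longrightarrow> cc a k \<omega>"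
  unfolding cc_def by auto



lemma cc_Suc': "cc a (Suc i) \<omega> \<longleftrightarrow> (\<exists>n. fst (shd \<omega>) = n \<and> 1 < a + n \<and> cc (a + n - 1) i (stl \<omega>))"
  using cc_Suc[of a i "shd \<omega>" "stl \<omega>"] by simp

lemma cc_meas:
  assumes f[measurable]: "fst \<in> M \<rightarrow>\<^sub>M count_space UNIV"
  shows "Measurable.pred (stream_space M) (cc a i)"
proof (induction i arbitrary: a)
  case 0 then show ?case by simp
next
  case (Suc i)
  have [measurable]: "Measurable.pred (stream_space M) (cc b i)" for b by (rule Suc)
  show ?case unfolding cc_Suc' by measurable
qed



lemma cc_indep:
  fixes M :: "(nat \<times> 'b) measure"
  assumes P: "prob_space M"
  assumes f[measurable]: "fst \<in> M \<rightarrow>\<^sub>M count_space UNIV"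
  shows "(\<integral>\<^sup>+\<omega>. (if cc a i \<omega> then of_nat (fst (\<omega> !! i)) else 0) \<partial>stream_space M)
       = (\<integral>\<^sup>+x. of_nat (fst x) \<partial>M) * (\<integral>\<^sup>+\<omega>. (if cc a i \<omega> then 1 else 0) \<partial>stream_space M)"
proof -
  interpret prob_space M by (rule P)
  interpret S: prob_space "stream_space M" by (rule prob_space_stream_space)
  let ?EN = "\<integral>\<^sup>+x. of_nat (fst x) \<partial>M"
  show ?thesis
proof (induction i arbitrary: a)
  case 0
  have "(\<integral>\<^sup>+\<omega>. (if cc a 0 \<omega> then of_nat (fst (\<omega> !! 0)) else 0) \<partial>stream_space M)
      = (\<integral>\<^sup>+\<omega>. of_nat (fst (shd \<omega>)) \<partial>stream_space M)" by simp
  also have "\<dots> = (\<integral>\<^sup>+x. (\<integral>\<^sup>+X. of_nat (fst (shd (x ## X))) \<partial>stream_space M) \<partial>M)"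
    by (rule nn_integral_stream_space) measurable
  also have "\<dots> = ?EN" using S.emeasure_space_1 by simp
  finally show ?case using S.emeasure_space_1 by simp
next
  case (Suc i)
  have [measurable]: "Measurable.pred (stream_space M) (cc b j)" for b j by (rule cc_meas[OF f])
  have "(\<integral>\<^sup>+\<omega>. (if cc a (Suc i) \<omega> then of_nat (fst (\<omega> !! Suc i)) else 0) \<partial>stream_space M)
      = (\<integral>\<^sup>+x. (\<integral>\<^sup>+X. (if cc a (Suc i) (x ## X) then of_nat (fst ((x ## X) !! Suc i)) else 0) \<partial>stream_space M) \<partial>M)"
    by (rule nn_integral_stream_space) measurable
  also have "\<dots> = (\<integral>\<^sup>+x. (\<integral>\<^sup>+X. ?EN * (if cc a (Suc i) (x ## X) then 1 else 0) \<partial>stream_space M) \<partial>M)"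
  proof (rule nn_integral_cong)
    fix x assume x: "x \<in> space M"
    have [measurable]: "(\<lambda>X. x ## X) \<in> stream_space M \<rightarrow>\<^sub>M stream_space M"
      using x by measurable
    have "(\<integral>\<^sup>+X. (if cc a (Suc i) (x ## X) then of_nat (fst ((x ## X) !! Suc i)) else 0) \<partial>stream_space M)
        = (if 1 < a + fst x then (\<integral>\<^sup>+X. (if cc (a + fst x - 1) i X then of_nat (fst (X !! i)) else 0) \<partial>stream_space M) else 0)"
      by (simp add: cc_Suc, intro impI nn_integral_cong, simp only: snth_Stream)
    also have "\<dots> = (if 1 < a + fst x then ?EN * (\<integral>\<^sup>+X. (if cc (a + fst x - 1) i X then 1 else 0) \<partial>stream_space M) else 0)"
      using Suc.IH by simp
    also have "\<dots> = ?EN * (\<integral>\<^sup>+X. (if cc a (Suc i) (x ## X) then 1 else 0) \<partial>stream_space M)"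
      by (simp add: cc_Suc)
    also have "\<dots> = (\<integral>\<^sup>+X. ?EN * (if cc a (Suc i) (x ## X) then 1 else 0) \<partial>stream_space M)"
      by (rule nn_integral_cmult[symmetric]) measurable
    finally show "(\<integral>\<^sup>+X. (if cc a (Suc i) (x ## X) then of_nat (fst ((x ## X) !! Suc i)) else 0) \<partial>stream_space M)
        = (\<integral>\<^sup>+X. ?EN * (if cc a (Suc i) (x ## X) then 1 else 0) \<partial>stream_space M)" .
  qed
  also have "\<dots> = (\<integral>\<^sup>+\<omega>. ?EN * (if cc a (Suc i) \<omega> then 1 else 0) \<partial>stream_space M)"
    by (rule nn_integral_stream_space[symmetric]) measurable
  also have "\<dots> = ?EN * (\<integral>\<^sup>+\<omega>. (if cc a (Suc i) \<omega> then 1 else 0) \<partial>stream_space M)"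
    by (rule nn_integral_cmult) measurable
  finally show ?case .
qed
qed



lemma suminf_one_top: "(\<Sum>i. (1::ennreal)) = top"
proof (rule ccontr)
  assume "(\<Sum>i. (1::ennreal)) \<noteq> top"
  then obtain n where n: "(\<Sum>i. (1::ennreal)) < of_nat n"
    using ennreal_Ex_less_of_nat top.not_eq_extremum by blast
  have "(\<Sum>i<n. (1::ennreal)) \<le> (\<Sum>i. 1)"
    by (rule sum_le_suminf) auto
  then show False using n by simp
qed

lemma suminf_cut:
  fixes f :: "nat \<Rightarrow> ennreal"
  assumes "\<And>i. i \<ge> s \<Longrightarrow> f i = 0"
  shows "(\<Sum>i. f i) = (\<Sum>i<s. f i)"
  using assms by (intro suminf_finite) auto

lemma key_ineq:
  fixes \<omega> :: "(nat \<times> 'b) stream"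
  shows "(\<Sum>i. (if cc 0 i \<omega> then of_nat (fst (\<omega> !! i)) else 0)) + (if fst (\<omega> !! 0) = 0 then 1 else 0)
         \<le> (\<Sum>i. (if cc 0 i \<omega> then 1 else 0) :: ennreal)"
proof (cases "\<forall>i. cc 0 i \<omega>")
  case True
  then show ?thesis by (simp add: suminf_one_top)
next
  case False
  define s where "s = (LEAST i. \<not> cc 0 i \<omega>)"
  have ns: "\<not> cc 0 s \<omega>" using False unfolding s_def by (metis LeastI)
  have ge: "\<not> cc 0 i \<omega>" if "i \<ge> s" for i using ns cc_mono that by blast
  have lt: "cc 0 i \<omega>" if "i < s" for i using not_less_Least[of i "\<lambda>i. \<not> cc 0 i \<omega>"] that unfolding s_def by blast
  have s1: "s \<ge> 1" using ns by (cases s) auto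
  define A where "A j = (\<Sum>k<j. fst (\<omega> !! k))" for j
  have 1: "(\<Sum>i. (if cc 0 i \<omega> then of_nat (fst (\<omega> !! i)) else 0)) = (of_nat (A s) :: ennreal)"
    by (subst suminf_cut[of s]) (auto simp: ge lt A_def)
  have 2: "(\<Sum>i. (if cc 0 i \<omega> then 1 else 0) :: ennreal) = of_nat s"
    by (subst suminf_cut[of s]) (auto simp: ge lt)
  have As: "A s \<le> s"
  proof -
    obtain j where j: "j \<in> {1..s}" "\<not> j < A j" using ns unfolding cc_def A_def by auto
    show ?thesis
    proof (cases "j = s")
      case True then show ?thesis using j by simp
    next
      case False
      then have "cc 0 j \<omega>" using lt j by auto
      then show ?thesis using j unfolding cc_def A_def by auto
    qed
  qed
  have "A s + (if fst (\<omega> !! 0) = 0 then 1 else 0) \<le> s"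
  proof (cases "s = 1")
    case True
    then show ?thesis using As by (auto simp: A_def)
  next
    case False
    with s1 have s2: "s \<ge> 2" by simp
    have c: "cc 0 (s - 1) \<omega>" using lt s1 by simp
    have "s - 1 < A (s - 1)" using c s2 unfolding cc_def A_def by auto
    moreover have "A (s - 1) \<le> A s" unfolding A_def by (rule sum_mono2) auto
    moreover have "1 < A 1" using bspec[OF c[unfolded cc_def], of 1] s2 by (simp add: A_def)
    ultimately show ?thesis using As by (auto simp: A_def)
  qed
  then have "(of_nat (A s) :: ennreal) + (if fst (\<omega> !! 0) = 0 then 1 else 0) \<le> of_nat s"
    by (metis (mono_tags, lifting) of_nat_1 of_nat_0 of_nat_add of_nat_le_iff)
  then show ?thesis using 1 2 by simp
qed

lemma tau_ge:
  "(\<Sum>i. (if cc 0 i \<omega> then 1 else 0) :: ennreal) \<le> return_time_empty l r \<omega>"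
proof (cases "\<exists>t\<ge>1. polling_W l r {#} \<omega> t = {#}")
  case True
  define T where "T = (LEAST t. t \<ge> 1 \<and> polling_W l r {#} \<omega> t = {#})"
  have T: "T \<ge> 1" "polling_W l r {#} \<omega> T = {#}"
    using LeastI_ex[OF True[simplified Bex_def]] unfolding T_def by auto
  have "(\<Sum>k<T. fst (\<omega> !! k)) \<le> T" using size_W[of "{#}" \<omega> T l r] T by simp
  then have ge: "\<not> cc 0 i \<omega>" if "i \<ge> T" for i
    using that T unfolding cc_def by (auto intro!: bexI[of _ T])
  have "(\<Sum>i. (if cc 0 i \<omega> then 1 else 0) :: ennreal) = (\<Sum>i<T. (if cc 0 i \<omega> then 1 else 0))"
    by (subst suminf_cut[of T]) (auto simp: ge)
  also have "\<dots> \<le> (\<Sum>i<T. 1)" by (intro sum_mono) auto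
  also have "\<dots> = return_time_empty l r \<omega>"
    unfolding return_time_empty_def using True T_def by simp
  finally show ?thesis .
next
  case False
  then have "return_time_empty l r \<omega> = top" unfolding return_time_empty_def by auto
  then show ?thesis by simp
qed



lemma setup_facts:
  fixes l r lam :: real and G :: "real measure"
  assumes "l > 0" and "lam > 0"
    and "prob_space G" and "sets G = sets borel"
    and "AE s in G. s \<ge> 0"
  shows "prob_space (input_dist l lam G)" "fst \<in> input_dist l lam G \<rightarrow>\<^sub>M count_space UNIV"
proof -
  have A: "prob_space (arrivals_dist lam G)" using assms by (intro arr_prob) auto
  show "prob_space (input_dist l lam G)" using input_prob[OF assms(1) A] .
  have "fst \<in> input_dist l lam G \<rightarrow>\<^sub>M arrivals_dist lam G"
    unfolding input_dist_def by (rule measurable_fst)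
  then show "fst \<in> input_dist l lam G \<rightarrow>\<^sub>M count_space UNIV"
    by (simp add: arrivals_dist_def)
qed

lemma part1:
  fixes l r lam :: real and G :: "real measure"
  assumes l: "l > 0" and lam: "lam > 0"
    and G: "prob_space G" "sets G = sets borel"
    and ae: "AE s in G. s \<ge> 0"
    and int: "integrable G (\<lambda>s. s)"
    and ge: "lam * (\<integral> s. s \<partial>G) \<ge> 1"
  shows "\<not> polling_positive_recurrent l r lam G"
proof
  let ?M = "input_dist l lam G"
  let ?S = "stream_space ?M"
  have A: "prob_space (arrivals_dist lam G)" using G ae lam by (intro arr_prob) auto
  have PM: "prob_space ?M" and f[measurable]: "fst \<in> ?M \<rightarrow>\<^sub>M count_space UNIV"
    using setup_facts[OF l lam G ae] by auto
  interpret prob_space ?M by (rule PM)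
  interpret S: prob_space ?S by (rule prob_space_stream_space)
  have [measurable]: "Measurable.pred ?S (cc b j)" for b j by (rule cc_meas[OF f])
  define EN where "EN = (\<integral>\<^sup>+x. of_nat (fst x) \<partial>?M)"
  have EN: "EN = ennreal (lam * (\<integral> s. s \<partial>G))"
    unfolding EN_def input_fst[OF l A, of of_nat] using arr_mean[OF G ae _ int] lam by simp
  have EN1: "1 \<le> EN" unfolding EN using ge by simp
  define p0 where "p0 = (\<integral>\<^sup>+\<omega>. (if fst (\<omega> !! 0) = 0 then 1 else 0) \<partial>?S)"
  have "p0 = (\<integral>\<^sup>+x. (\<integral>\<^sup>+X. (if fst ((x ## X) !! 0) = 0 then 1 else 0) \<partial>?S) \<partial>?M)"
    unfolding p0_def by (rule nn_integral_stream_space) measurable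
  also have "\<dots> = (\<integral>\<^sup>+x. indicator {0} (fst x) \<partial>?M)"
    using S.emeasure_space_1 by (intro nn_integral_cong) (simp add: indicator_def)
  also have "\<dots> = (\<integral>\<^sup>+n. indicator {0} n \<partial>arrivals_dist lam G)"
    by (rule input_fst[OF l A])
  finally have p0: "p0 > 0" using arr_zero[OF G ae] lam by simp
  define E\<sigma> where "E\<sigma> = (\<integral>\<^sup>+\<omega>. (\<Sum>i. (if cc 0 i \<omega> then 1 else 0) :: ennreal) \<partial>?S)"
  have "(\<integral>\<^sup>+\<omega>. (\<Sum>i. (if cc 0 i \<omega> then of_nat (fst (\<omega> !! i)) else 0)) + (if fst (\<omega> !! 0) = 0 then 1 else 0) \<partial>?S)
      = (\<integral>\<^sup>+\<omega>. (\<Sum>i. (if cc 0 i \<omega> then of_nat (fst (\<omega> !! i)) else 0)) \<partial>?S) + p0"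
    unfolding p0_def by (rule nn_integral_add) measurable
  also have "(\<integral>\<^sup>+\<omega>. (\<Sum>i. (if cc 0 i \<omega> then of_nat (fst (\<omega> !! i)) else 0)) \<partial>?S)
      = (\<Sum>i. \<integral>\<^sup>+\<omega>. (if cc 0 i \<omega> then of_nat (fst (\<omega> !! i)) else 0) \<partial>?S)"
    by (rule nn_integral_suminf) measurable
  also have "\<dots> = (\<Sum>i. EN * \<integral>\<^sup>+\<omega>. (if cc 0 i \<omega> then 1 else 0) \<partial>?S)"
    unfolding EN_def using cc_indep[OF PM f] by simp
  also have "\<dots> = EN * E\<sigma>"
  proof -
    have "(\<integral>\<^sup>+\<omega>. (\<Sum>i. (if cc 0 i \<omega> then 1 else 0) :: ennreal) \<partial>?S) = (\<Sum>i. \<integral>\<^sup>+\<omega>. (if cc 0 i \<omega> then 1 else 0) \<partial>?S)"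
      by (rule nn_integral_suminf) measurable
    then show ?thesis unfolding E\<sigma>_def by simp
  qed
  finally have eq: "(\<integral>\<^sup>+\<omega>. (\<Sum>i. (if cc 0 i \<omega> then of_nat (fst (\<omega> !! i)) else 0)) + (if fst (\<omega> !! 0) = 0 then 1 else 0) \<partial>?S) = EN * E\<sigma> + p0" .
  have "(\<integral>\<^sup>+\<omega>. (\<Sum>i. (if cc 0 i \<omega> then of_nat (fst (\<omega> !! i)) else 0)) + (if fst (\<omega> !! 0) = 0 then 1 else 0) \<partial>?S) \<le> E\<sigma>"
    unfolding E\<sigma>_def by (rule nn_integral_mono) (rule key_ineq)
  with eq have "EN * E\<sigma> + p0 \<le> E\<sigma>" by simp
  moreover have "1 * E\<sigma> \<le> EN * E\<sigma>" by (rule mult_right_mono[OF EN1]) simp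
  then have "E\<sigma> + p0 \<le> EN * E\<sigma> + p0" by (intro add_right_mono) simp
  ultimately have "E\<sigma> + p0 \<le> E\<sigma>" by (rule order_trans[rotated])
  then have le: "E\<sigma> + p0 \<le> E\<sigma> + 0" by (simp only: add_0_right)
  assume "polling_positive_recurrent l r lam G"
  then have "(\<integral>\<^sup>+\<omega>. return_time_empty l r \<omega> \<partial>?S) < \<infinity>"
    unfolding polling_positive_recurrent_def polling_space_def .
  moreover have "E\<sigma> \<le> (\<integral>\<^sup>+\<omega>. return_time_empty l r \<omega> \<partial>?S)"
    unfolding E\<sigma>_def by (intro nn_integral_mono tau_ge)
  ultimately have "E\<sigma> \<noteq> \<infinity>" by auto
  with le have "p0 \<le> 0" by (simp add: ennreal_add_left_cancel_le)
  with p0 show False by simp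
qed



lemma exp_quad:
  fixes t :: real assumes "t \<ge> 0"
  shows "exp (- t) \<le> 1 - t + t^2/2"
proof -
  let ?f = "\<lambda>x::real. 1 - x + x^2/2 - exp (- x)"
  have "?f 0 \<le> ?f t"
  proof (rule DERIV_nonneg_imp_increasing_open[OF assms])
    fix x :: real assume "0 < x" "x < t"
    have "DERIV ?f x :> (- 1 + x + exp (- x))"
      by (auto intro!: derivative_eq_intros simp: power2_eq_square)
    moreover have "- 1 + x + exp (- x) \<ge> 0" using exp_ge_add_one_self[of "- x"] by simp
    ultimately show "\<exists>y. DERIV ?f x :> y \<and> y \<ge> 0" by blast
  next
    show "continuous_on {0..t} ?f" by (intro continuous_intros) auto
  qed
  then show ?thesis by simp
qed

lemma prod_exp:
  fixes M :: "'a measure" and Y :: "'a \<Rightarrow> real"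
  assumes P: "prob_space M" and Y[measurable]: "Y \<in> borel_measurable M"
  shows "(\<integral>\<^sup>+\<omega>. ennreal (exp (- (\<Sum>k<t. Y (\<omega> !! k)))) \<partial>stream_space M)
       = (\<integral>\<^sup>+x. ennreal (exp (- Y x)) \<partial>M) ^ t"
proof -
  interpret prob_space M by (rule P)
  interpret S: prob_space "stream_space M" by (rule prob_space_stream_space)
  show ?thesis
  proof (induction t)
    case 0 then show ?case using S.emeasure_space_1 by simp
  next
    case (Suc t)
    let ?\<phi> = "\<integral>\<^sup>+x. ennreal (exp (- Y x)) \<partial>M"
    have "(\<integral>\<^sup>+\<omega>. ennreal (exp (- (\<Sum>k<Suc t. Y (\<omega> !! k)))) \<partial>stream_space M)
       = (\<integral>\<^sup>+x. (\<integral>\<^sup>+X. ennreal (exp (- (\<Sum>k<Suc t. Y ((x ## X) !! k)))) \<partial>stream_space M) \<partial>M)"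
      by (rule nn_integral_stream_space) measurable
    also have "\<dots> = (\<integral>\<^sup>+x. ennreal (exp (- Y x)) * ?\<phi> ^ t \<partial>M)"
    proof (rule nn_integral_cong)
      fix x assume x: "x \<in> space M"
      have "(\<integral>\<^sup>+X. ennreal (exp (- (\<Sum>k<Suc t. Y ((x ## X) !! k)))) \<partial>stream_space M)
          = (\<integral>\<^sup>+X. ennreal (exp (- Y x)) * ennreal (exp (- (\<Sum>k<t. Y (X !! k)))) \<partial>stream_space M)"
        by (intro nn_integral_cong)
           (simp del: sum.lessThan_Suc add: sum.lessThan_Suc_shift snth_Stream exp_add[symmetric] ennreal_mult[symmetric])
      also have "\<dots> = ennreal (exp (- Y x)) * (\<integral>\<^sup>+X. ennreal (exp (- (\<Sum>k<t. Y (X !! k)))) \<partial>stream_space M)"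
        by (rule nn_integral_cmult) measurable
      finally show "(\<integral>\<^sup>+X. ennreal (exp (- (\<Sum>k<Suc t. Y ((x ## X) !! k)))) \<partial>stream_space M)
          = ennreal (exp (- Y x)) * ?\<phi> ^ t" using Suc.IH by simp
    qed
    also have "\<dots> = ?\<phi> * ?\<phi> ^ t" by (rule nn_integral_multc) measurable
    finally show ?case by simp
  qed
qed

lemma chernoff:
  fixes M :: "'a measure" and Y :: "'a \<Rightarrow> real"
  assumes P: "prob_space M" and Y[measurable]: "Y \<in> borel_measurable M" and th: "\<theta> \<ge> 0"
  shows "emeasure (stream_space M) {\<omega>\<in>space (stream_space M). (\<Sum>k<n. Y (\<omega> !! k)) \<le> c * n}
       \<le> (ennreal (exp (\<theta> * c)) * (\<integral>\<^sup>+x. ennreal (exp (- (\<theta> * Y x))) \<partial>M)) ^ n"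
proof -
  let ?S = "stream_space M"
  have "emeasure ?S {\<omega>\<in>space ?S. (\<Sum>k<n. Y (\<omega> !! k)) \<le> c * n}
      = (\<integral>\<^sup>+\<omega>. indicator {\<omega>\<in>space ?S. (\<Sum>k<n. Y (\<omega> !! k)) \<le> c * n} \<omega> \<partial>?S)"
    by (rule nn_integral_indicator[symmetric]) measurable
  also have "\<dots> \<le> (\<integral>\<^sup>+\<omega>. ennreal (exp (\<theta> * c * n)) * ennreal (exp (- (\<Sum>k<n. \<theta> * Y (\<omega> !! k)))) \<partial>?S)"
  proof (rule nn_integral_mono)
    fix \<omega> assume "\<omega> \<in> space ?S"
    show "indicator {\<omega>\<in>space ?S. (\<Sum>k<n. Y (\<omega> !! k)) \<le> c * n} \<omega>
        \<le> ennreal (exp (\<theta> * c * n)) * ennreal (exp (- (\<Sum>k<n. \<theta> * Y (\<omega> !! k))))"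
    proof (cases "(\<Sum>k<n. Y (\<omega> !! k)) \<le> c * n")
      case True
      have "\<theta> * (\<Sum>k<n. Y (\<omega> !! k)) \<le> \<theta> * (c * n)" using True th by (rule mult_left_mono)
      then have "1 \<le> exp (\<theta> * c * n) * exp (- (\<Sum>k<n. \<theta> * Y (\<omega> !! k)))"
        by (simp add: exp_add[symmetric] sum_distrib_left[symmetric] mult.assoc)
      then show ?thesis by (simp add: ennreal_mult[symmetric] indicator_def)
    qed (simp add: indicator_def)
  qed
  also have "\<dots> = ennreal (exp (\<theta> * c * n)) * (\<integral>\<^sup>+\<omega>. ennreal (exp (- (\<Sum>k<n. \<theta> * Y (\<omega> !! k)))) \<partial>?S)"
    by (rule nn_integral_cmult) measurable
  also have "\<dots> = ennreal (exp (\<theta> * c * n)) * (\<integral>\<^sup>+x. ennreal (exp (- (\<theta> * Y x))) \<partial>M) ^ n"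
    using prod_exp[OF P, of "\<lambda>x. \<theta> * Y x" n] by simp
  also have "ennreal (exp (\<theta> * c * n)) = ennreal (exp (\<theta> * c)) ^ n"
    by (simp add: exp_of_nat2_mult[symmetric] ennreal_power mult.commute mult.left_commute)
  finally show ?thesis by (simp add: power_mult_distrib)
qed



lemma Y_meas:
  assumes f: "fst \<in> M \<rightarrow>\<^sub>M count_space UNIV"
  shows "(\<lambda>x. real (min (fst x) K)) \<in> borel_measurable M"
proof -
  have "(\<lambda>n::nat. real (min n K)) \<in> count_space UNIV \<rightarrow>\<^sub>M borel" by simp
  from measurable_comp[OF f this] show ?thesis by (simp add: comp_def)
qed

lemma SUP_min_nat: "(SUP K. (of_nat (min n K) :: ennreal)) = of_nat n"
proof (rule antisym)
  show "(SUP K. (of_nat (min n K) :: ennreal)) \<le> of_nat n" by (rule SUP_least) simp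
  show "of_nat n \<le> (SUP K. (of_nat (min n K) :: ennreal))"
    using SUP_upper[of n UNIV "\<lambda>K. (of_nat (min n K) :: ennreal)"] by simp
qed

lemma part2:
  fixes l r lam :: real and G :: "real measure"
  assumes l: "l > 0" and lam: "lam > 0"
    and G: "prob_space G" "sets G = sets borel"
    and ae: "AE s in G. s \<ge> 0"
    and int: "integrable G (\<lambda>s. s)"
    and gt: "lam * (\<integral> s. s \<partial>G) > 1"
  shows "AE \<omega> in polling_space l lam G. filterlim (\<lambda>t. size (polling_W l r \<zeta> \<omega> t)) at_top sequentially"
proof -
  let ?M = "input_dist l lam G"
  let ?S = "stream_space ?M"
  define L where "L = lam * (\<integral> s. s \<partial>G)"
  define c where "c = (1 + L) / 2"
  define c2 where "c2 = (c + L) / 2"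
  have cL: "1 < c" "c < c2" "c2 < L" using gt unfolding c_def c2_def L_def by auto
  have A: "prob_space (arrivals_dist lam G)" using G ae lam by (intro arr_prob) auto
  have PM: "prob_space ?M" and f[measurable]: "fst \<in> ?M \<rightarrow>\<^sub>M count_space UNIV"
    using setup_facts[OF l lam G ae] by auto
  interpret prob_space ?M by (rule PM)
  interpret S: prob_space ?S by (rule prob_space_stream_space)
  have EN: "(\<integral>\<^sup>+x. of_nat (fst x) \<partial>?M) = ennreal L"
    unfolding L_def input_fst[OF l A, of of_nat] using arr_mean[OF G ae _ int] lam by simp
  have "(\<integral>\<^sup>+x. of_nat (fst x) \<partial>?M) = (\<integral>\<^sup>+x. (SUP K. of_nat (min (fst x) K)) \<partial>?M)"
    by (simp add: SUP_min_nat)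
  also have "\<dots> = (SUP K. \<integral>\<^sup>+x. of_nat (min (fst x) K) \<partial>?M)"
  proof (rule nn_integral_monotone_convergence_SUP)
    show "incseq (\<lambda>K x. (of_nat (min (fst x) K) :: ennreal))"
      by (auto simp: incseq_def le_fun_def)
    fix K :: nat
    have "(\<lambda>n::nat. (of_nat (min n K) :: ennreal)) \<in> count_space UNIV \<rightarrow>\<^sub>M borel" by simp
    from measurable_comp[OF f this]
    show "(\<lambda>x. (of_nat (min (fst x) K) :: ennreal)) \<in> borel_measurable ?M" by (simp add: comp_def)
  qed
  finally have "(\<integral>\<^sup>+x. of_nat (fst x) \<partial>?M) = (SUP K. \<integral>\<^sup>+x. of_nat (min (fst x) K) \<partial>?M)" .
  note supeq = this
  then have "ennreal c2 < (SUP K. \<integral>\<^sup>+x. of_nat (min (fst x) K) \<partial>?M)"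
  proof -
    have "ennreal c2 < ennreal L" using cL by (intro ennreal_lessI) auto
    then show ?thesis using EN supeq by simp
  qed
  then obtain K where K: "ennreal c2 < (\<integral>\<^sup>+x. of_nat (min (fst x) K) \<partial>?M)"
    by (auto simp: less_SUP_iff)
  define Y :: "nat \<times> (nat \<Rightarrow> real) \<times> real \<Rightarrow> real" where "Y x = real (min (fst x) K)" for x
  have Y[measurable]: "Y \<in> borel_measurable ?M" unfolding Y_def by (rule Y_meas[OF f])
  have Y0: "Y x \<ge> 0" "Y x \<le> K" for x unfolding Y_def by auto
  have EY: "ennreal c2 \<le> (\<integral>\<^sup>+x. ennreal (Y x) \<partial>?M)"
    using K unfolding Y_def by (simp add: ennreal_of_nat_eq_real_of_nat)
  define \<theta> where "\<theta> = (c2 - c) / (real K ^ 2 + 1)"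
  have th: "\<theta> > 0" unfolding \<theta>_def using cL by (intro divide_pos_pos) (auto simp: add_nonneg_pos)
  have th2: "\<theta> * real K ^ 2 / 2 < c2 - c"
  proof -
    have "\<theta> * real K ^ 2 = (c2 - c) * (real K ^ 2 / (real K ^ 2 + 1))" unfolding \<theta>_def by simp
    also have "\<dots> \<le> (c2 - c) * 1"
    proof (intro mult_left_mono)
      have "real K ^ 2 \<le> real K ^ 2 + 1" by simp
      then show "real K ^ 2 / (real K ^ 2 + 1) \<le> 1" by (subst divide_le_eq_1) (auto simp: add_nonneg_pos)
    qed (use cL in auto)
    finally show ?thesis using cL by simp
  qed
  define \<phi> where "\<phi> = (\<integral>\<^sup>+x. ennreal (exp (- (\<theta> * Y x))) \<partial>?M)"
  have pt: "ennreal (exp (- (\<theta> * Y x))) + ennreal (\<theta> * Y x) \<le> ennreal (1 + \<theta>^2 * real K ^ 2 / 2)" for x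
  proof -
    have "exp (- (\<theta> * Y x)) \<le> 1 - \<theta> * Y x + (\<theta> * Y x)^2/2"
      using exp_quad[of "\<theta> * Y x"] th Y0[of x] by simp
    also have "(\<theta> * Y x)^2 \<le> \<theta>^2 * real K ^ 2"
      using th Y0[of x] by (simp add: power_mult_distrib power_mono mult_left_mono)
    finally have "exp (- (\<theta> * Y x)) + \<theta> * Y x \<le> 1 + \<theta>^2 * real K ^ 2 / 2" by simp
    then show ?thesis using th Y0[of x] by (simp add: ennreal_plus[symmetric] del: ennreal_plus)
  qed
  have "\<phi> + (\<integral>\<^sup>+x. ennreal (\<theta> * Y x) \<partial>?M) = (\<integral>\<^sup>+x. ennreal (exp (- (\<theta> * Y x))) + ennreal (\<theta> * Y x) \<partial>?M)"
    unfolding \<phi>_def by (rule nn_integral_add[symmetric]) measurable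
  also have "\<dots> \<le> (\<integral>\<^sup>+x. ennreal (1 + \<theta>^2 * real K ^ 2 / 2) \<partial>?M)"
    by (intro nn_integral_mono pt)
  also have "\<dots> = ennreal (1 + \<theta>^2 * real K ^ 2 / 2)" using emeasure_space_1 by simp
  finally have phi_le: "\<phi> + ennreal \<theta> * (\<integral>\<^sup>+x. ennreal (Y x) \<partial>?M) \<le> ennreal (1 + \<theta>^2 * real K ^ 2 / 2)"
    using th Y0 by (simp add: ennreal_mult nn_integral_cmult)
  have "\<phi> + ennreal (\<theta> * c2) \<le> \<phi> + ennreal \<theta> * (\<integral>\<^sup>+x. ennreal (Y x) \<partial>?M)"
  proof (intro add_left_mono)
    have "ennreal (\<theta> * c2) = ennreal \<theta> * ennreal c2" using th cL by (simp add: ennreal_mult)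
    also have "\<dots> \<le> ennreal \<theta> * (\<integral>\<^sup>+x. ennreal (Y x) \<partial>?M)" using EY by (rule mult_left_mono) simp
    finally show "ennreal (\<theta> * c2) \<le> ennreal \<theta> * (\<integral>\<^sup>+x. ennreal (Y x) \<partial>?M)" .
  qed
  from this phi_le have phi2: "\<phi> + ennreal (\<theta> * c2) \<le> ennreal (1 + \<theta>^2 * real K ^ 2 / 2)" by (rule order_trans)
  then have "\<phi> \<noteq> top" by (auto simp: top_add top_unique)
  then obtain \<phi>r where \<phi>r: "\<phi> = ennreal \<phi>r" "\<phi>r \<ge> 0" by (cases \<phi>) auto
  have "\<phi>r + \<theta> * c2 \<le> 1 + \<theta>^2 * real K ^ 2 / 2"
    using phi2 \<phi>r th cL by (simp add: ennreal_plus[symmetric] del: ennreal_plus)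
  moreover have "\<theta>^2 * real K ^ 2 / 2 < \<theta> * (c2 - c)"
    using mult_strict_left_mono[OF th2 th] by (simp add: power2_eq_square algebra_simps)
  ultimately have "\<phi>r < 1 - \<theta> * c" by (simp add: algebra_simps)
  also have "1 - \<theta> * c \<le> exp (- (\<theta> * c))" using exp_ge_add_one_self[of "- (\<theta> * c)"] by simp
  finally have "exp (\<theta> * c) * \<phi>r < exp (\<theta> * c) * exp (- (\<theta> * c))" by simp
  then have rho: "exp (\<theta> * c) * \<phi>r < 1" by (simp add: exp_add[symmetric])
  define \<rho> where "\<rho> = exp (\<theta> * c) * \<phi>r"
  have rho0: "\<rho> \<ge> 0" unfolding \<rho>_def using \<phi>r by simp
  define An where "An n = {\<omega>\<in>space ?S. (\<Sum>k<n. Y (\<omega> !! k)) \<le> c * n}" for n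
  have An_sets[measurable]: "An n \<in> sets ?S" for n unfolding An_def by measurable
  have An_le: "emeasure ?S (An n) \<le> ennreal (\<rho> ^ n)" for n
    using chernoff[OF PM Y, of \<theta> n c] th \<phi>r unfolding An_def \<phi>_def[symmetric] \<rho>_def
    by (simp add: ennreal_mult[symmetric] ennreal_power[symmetric])
  have "AE \<omega> in ?S. eventually (\<lambda>n. \<omega> \<in> space ?S - An n) sequentially"
  proof (rule borel_cantelli_AE1)
    show "emeasure ?S (An n) < \<infinity>" for n using S.emeasure_finite[of "An n"] by (simp add: less_top[symmetric])
    have mle: "measure ?S (An n) \<le> \<rho> ^ n" for n
      using An_le[of n] rho0 by (simp add: S.emeasure_eq_measure)
    have "summable (\<lambda>n. \<rho> ^ n)"
      using rho rho0 unfolding \<rho>_def[symmetric] by (intro summable_geometric) simp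
    then show "summable (\<lambda>n. measure ?S (An n))"
    proof (rule summable_comparison_test'[of "\<lambda>n. \<rho> ^ n" 0])
      fix n :: nat
      show "norm (measure ?S (An n)) \<le> \<rho> ^ n" using mle[of n] by simp
    qed
  qed measurable
  then show ?thesis unfolding polling_space_def
  proof (rule AE_mp, intro AE_I2 impI)
    fix \<omega> assume \<omega>: "\<omega> \<in> space ?S" and ev: "eventually (\<lambda>n. \<omega> \<in> space ?S - An n) sequentially"
    have ev2: "eventually (\<lambda>n. (c - 1) * n < real (size (polling_W l r \<zeta> \<omega> n))) sequentially"
      using ev
    proof eventually_elim
      case (elim n)
      then have "c * n < (\<Sum>k<n. Y (\<omega> !! k))" unfolding An_def using \<omega> by auto
      also have "(\<Sum>k<n. Y (\<omega> !! k)) \<le> real (\<Sum>k<n. fst (\<omega> !! k))"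
        unfolding Y_def of_nat_sum by (intro sum_mono) auto
      also have "\<dots> \<le> real (size (polling_W l r \<zeta> \<omega> n) + n)"
        using size_W[of \<zeta> \<omega> n l r] by linarith
      finally show ?case by (simp add: algebra_simps)
    qed
    show "filterlim (\<lambda>t. size (polling_W l r \<zeta> \<omega> t)) at_top sequentially"
      unfolding filterlim_at_top
    proof
      fix Z :: nat
      have "eventually (\<lambda>n. real Z / (c - 1) \<le> real n) sequentially"
      proof (rule eventually_sequentiallyI[of "nat \<lceil>real Z / (c - 1)\<rceil>"])
        fix n assume "nat \<lceil>real Z / (c - 1)\<rceil> \<le> n"
        then show "real Z / (c - 1) \<le> real n" by (metis le_nat_iff of_nat_le_iff real_nat_ceiling_ge order_trans)
      qed
      with ev2 show "eventually (\<lambda>n. Z \<le> size (polling_W l r \<zeta> \<omega> n)) sequentially"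
      proof eventually_elim
        case (elim n)
        then have "real Z \<le> (c - 1) * n" using cL by (simp add: pos_divide_le_eq mult.commute)
        with elim have "real Z < real (size (polling_W l r \<zeta> \<omega> n))" by linarith
        then show ?case by simp
      qed
    qed
  qed
qed


theorem theorem2:
  fixes l r lam :: real and G :: "real measure"
  assumes "l > 0" and "r > 0" and "lam > 0"
    and "prob_space G" and "sets G = sets borel"
    and "AE s in G. s \<ge> 0"
    and "integrable G (\<lambda>s. s)"
  shows "(lam * (\<integral> s. s \<partial>G) \<ge> 1 \<longrightarrow> \<not> polling_positive_recurrent l r lam G)
       \<and> (lam * (\<integral> s. s \<partial>G) > 1 \<longrightarrow>
            (\<forall>\<zeta>. set_mset \<zeta> \<subseteq> {0..<l} \<longrightarrow>
               (AE \<omega> in polling_space l lam G.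
                  filterlim (\<lambda>t. size (polling_W l r \<zeta> \<omega> t)) at_top sequentially)))"
  using part1[OF assms(1,3,4,5,6,7)] part2[OF assms(1,3,4,5,6,7)] by blast

end
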